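(* Let $b\in\mathbb{N}\setminus\{1\}$, $\xi_m\in\{-1,+1\}$ ($m\in\mathbb{Z}_+$) arbitrary, $\phi:\mathbb{R}\to\mathbb{R}$ periodic with period $1$, vanishing on $\mathbb{Z}$, and H\"older continuous with exponent $\gamma\in(0,1]$, and $\psi:(0,\infty)\to(0,\infty)$ submultiplicative with $\psi(b^{-1})\in(0,1)$. Let $f(t)=\sum_{m=0}^\infty \xi_m\psi(b^{-m})\phi(b^mt)$, $t\in[0,1]$. Then for each $n\in\mathbb{N}$ and $p\ge1$, \[ V^{p,1}_n(f)=b^n\,\mathbb{E}\Big(\Big|\sum_{m=1}^n\xi_{n-m}\psi(b^{m-n})b^{-m}Y_m\Big|^p\Big). \] If in addition $\psi$ is multiplicative, then for each $n\in\mathbb{N}$ and $p\ge1$, \[ V^{p,1}_n(f)=\big((\psi(b^{-1}))^pb\big)^n\,\mathbb{E}\Big(\Big|\sum_{m=1}^n\xi_{n-m}(\psi(b^{-1})b)^{-m}Y_m\Big|^p\Big). \]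
   Context: $\psi$ submultiplicative: $\psi(xy)\le\psi(x)\psi(y)$ for $x,y>0$; multiplicative: equality holds. For a function $g$ on $[0,1]$ (extended by $g(s):=g(1)$ for $s>1$), $t\in[0,1]$, $n\in\mathbb{N}$, $p\ge1$: $V^{p,t}_n(g):=\sum_{k=0}^{\lfloor tb^n\rfloor}|g((k+1)b^{-n})-g(kb^{-n})|^p$. For $m\in\mathbb{N}$, $k\in\{0,\dots,b^m-1\}$ let $\lambda_{m,k}:=b^m(\phi((k+1)b^{-m})-\phi(kb^{-m}))$. Let $(U_n)_{n\in\mathbb{N}}$ be i.i.d. random variables uniformly distributed on $\{0,1,\dots,b-1\}$, and for $m\in\mathbb{N}$ let $R_m:=\sum_{i=1}^m U_ib^{i-1}$ and $Y_m:=\lambda_{m,R_m}$. *)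

theory Defs
  imports "HOL-Analysis.Analysis" "HOL-Probability.Probability"
begin

text \<open>Discrete p-variation with time horizon t at level n of g on [0,1];
  g is extended by g(s) := g(1) for s > 1 (realised via min 1).\<close>
definition pvar :: "nat \<Rightarrow> real \<Rightarrow> real \<Rightarrow> nat \<Rightarrow> (real \<Rightarrow> real) \<Rightarrow> real" where
  "pvar b p t n g =
     (\<Sum>k\<in>{0..nat \<lfloor>t * real b ^ n\<rfloor>}.
        \<bar>g (min 1 ((real k + 1) / real b ^ n)) - g (min 1 (real k / real b ^ n))\<bar> powr p)"

definition lam :: "nat \<Rightarrow> (real \<Rightarrow> real) \<Rightarrow> nat \<Rightarrow> nat \<Rightarrow> real" where
  "lam b \<phi> m k = real b ^ m * (\<phi> ((real k + 1) / real b ^ m) - \<phi> (real k / real b ^ m))"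

definition Rnd :: "nat \<Rightarrow> nat \<Rightarrow> (nat \<Rightarrow> nat) \<Rightarrow> nat" where
  "Rnd b m U = (\<Sum>i=1..m. U i * b ^ (i - 1))"

definition Yrv :: "nat \<Rightarrow> (real \<Rightarrow> real) \<Rightarrow> nat \<Rightarrow> (nat \<Rightarrow> nat) \<Rightarrow> real" where
  "Yrv b \<phi> m U = lam b \<phi> m (Rnd b m U)"

definition Ulaw :: "nat \<Rightarrow> nat \<Rightarrow> (nat \<Rightarrow> nat) pmf" where
  "Ulaw b n = Pi_pmf {1..n} 0 (\<lambda>_. pmf_of_set {0..<b})"

definition fser :: "nat \<Rightarrow> (nat \<Rightarrow> real) \<Rightarrow> (real \<Rightarrow> real) \<Rightarrow> (real \<Rightarrow> real) \<Rightarrow> real \<Rightarrow> real" where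
  "fser b \<xi> \<psi> \<phi> t = (\<Sum>m. \<xi> m * \<psi> (1 / real b ^ m) * \<phi> (real b ^ m * t))"

end

theory Submission
  imports Defs
begin


lemma pair_pmf_of_set_times:
  assumes "finite A" "A \<noteq> {}" "finite B" "B \<noteq> {}"
  shows "pair_pmf (pmf_of_set A) (pmf_of_set B) = pmf_of_set (A \<times> B)"
proof (rule pmf_eqI)
  fix x :: "'a \<times> 'b"
  obtain a c where x: "x = (a, c)" by (cases x)
  show "pmf (pair_pmf (pmf_of_set A) (pmf_of_set B)) x = pmf (pmf_of_set (A \<times> B)) x"
    using assms by (simp add: x pmf_pair card_cartesian_product indicator_def)
qed

lemma Rnd_Suc: "Rnd b (Suc n) U = Rnd b n U + U (Suc n) * b ^ n"
  by (simp add: Rnd_def)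

lemma Rnd_upd: "Rnd b n (U(Suc n := y)) = Rnd b n U"
  unfolding Rnd_def by (intro sum.cong) auto

lemma Rnd_bound: "b > 0 \<Longrightarrow> (\<And>i. i \<in> {1..n} \<Longrightarrow> U i < b) \<Longrightarrow> Rnd b n U < b ^ n"
proof (induction n)
  case 0 then show ?case by (simp add: Rnd_def)
next
  case (Suc n)
  have "Rnd b n U < b ^ n" using Suc by auto
  moreover have "U (Suc n) \<le> b - 1" using Suc.prems(2)[of "Suc n"] by auto
  ultimately have "Rnd b (Suc n) U < b^n + (b - 1) * b ^ n"
    by (simp add: Rnd_Suc add_less_le_mono)
  also have "\<dots> = b ^ Suc n" using Suc.prems(1)
    by (cases b) (auto simp: algebra_simps)
  finally show ?case .
qed

lemma Rnd_split: "m \<le> n \<Longrightarrow> \<exists>c. Rnd b n U = Rnd b m U + b ^ m * c"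
proof (induction n)
  case 0 then show ?case by simp
next
  case (Suc n)
  show ?case
  proof (cases "m = Suc n")
    case True then show ?thesis by (intro exI[of _ 0]) simp
  next
    case False
    then obtain c where "Rnd b n U = Rnd b m U + b ^ m * c" using Suc by auto
    moreover have "b ^ n = b ^ m * b ^ (n - m)" using Suc.prems False
      by (metis le_Suc_eq le_add_diff_inverse power_add)
    ultimately show ?thesis
      by (intro exI[of _ "c + U (Suc n) * b ^ (n - m)"]) (simp add: Rnd_Suc algebra_simps)
  qed
qed

lemma Rnd_mod: "b > 0 \<Longrightarrow> (\<And>i. i \<in> {1..n} \<Longrightarrow> U i < b) \<Longrightarrow> m \<le> n \<Longrightarrow>
   Rnd b m U = Rnd b n U mod b ^ m"
proof -
  assume a: "b > 0" "\<And>i. i \<in> {1..n} \<Longrightarrow> U i < b" "m \<le> n"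
  obtain c where c: "Rnd b n U = Rnd b m U + b ^ m * c" using Rnd_split a(3) by blast
  have "Rnd b m U < b ^ m" using a by (intro Rnd_bound) auto
  then show ?thesis using c by simp
qed

lemma Rnd_law: "b > 0 \<Longrightarrow> map_pmf (Rnd b n) (Ulaw b n) = pmf_of_set {0..<b ^ n}"
proof (induction n)
  case 0
  then show ?case by (simp add: Ulaw_def Rnd_def pmf_of_set_singleton)
next
  case (Suc n)
  have ins: "{1..Suc n} = insert (Suc n) {1..n}" by auto
  have img: "(\<lambda>(y, r). r + y * b ^ n) ` ({0..<b} \<times> {0..<b ^ n}) = {0..<b ^ Suc n}"
  proof (rule set_eqI, rule iffI)
    fix x assume "x \<in> (\<lambda>(y, r). r + y * b ^ n) ` ({0..<b} \<times> {0..<b ^ n})"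
    then obtain y r where "y < b" "r < b^n" "x = r + y * b^n" by auto
    then have "x < b^n + (b - 1) * b^n"
      by (metis add_less_le_mono less_Suc_eq_le Suc_pred' Suc.prems mult_le_mono1)
    also have "\<dots> = b ^ Suc n" using Suc.prems by (cases b) (auto simp: algebra_simps)
    finally show "x \<in> {0..<b ^ Suc n}" by simp
  next
    fix x assume "x \<in> {0..<b ^ Suc n}"
    then have "x div b^n < b" using Suc.prems by (simp add: div_less_iff_less_mult mult.commute)
    moreover have "x mod b^n < b^n" using Suc.prems by simp
    ultimately show "x \<in> (\<lambda>(y, r). r + y * b ^ n) ` ({0..<b} \<times> {0..<b ^ n})"
      by (intro image_eqI[of _ _ "(x div b^n, x mod b^n)"]) (auto simp: mod_div_mult_eq)
  qed
  have "map_pmf (Rnd b (Suc n)) (Ulaw b (Suc n)) =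
     map_pmf (\<lambda>x. Rnd b n (snd x) + fst x * b ^ n) (pair_pmf (pmf_of_set {0..<b}) (Ulaw b n))"
    unfolding Ulaw_def ins
    by (subst Pi_pmf_insert) (auto simp: map_pmf_comp Rnd_Suc Rnd_upd case_prod_beta)
  also have "\<dots> = map_pmf (\<lambda>(y, r). r + y * b ^ n) (pair_pmf (pmf_of_set {0..<b}) (map_pmf (Rnd b n) (Ulaw b n)))"
    by (simp add: pair_map_pmf2 map_pmf_comp case_prod_beta)
  also have "\<dots> = map_pmf (\<lambda>(y, r). r + y * b ^ n) (pmf_of_set ({0..<b} \<times> {0..<b ^ n}))"
    using Suc by (simp add: pair_pmf_of_set_times)
  also have "\<dots> = pmf_of_set ((\<lambda>(y, r). r + y * b ^ n) ` ({0..<b} \<times> {0..<b ^ n}))"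
  proof (rule map_pmf_of_set_inj)
    show "inj_on (\<lambda>(y, r). r + y * b ^ n) ({0..<b} \<times> {0..<b ^ n})"
    proof (rule inj_onI, clarsimp)
      fix y r y' r' assume h: "r < b^n" "r' < b^n" "r + y * b ^ n = r' + y' * b ^ n"
      have "r = (r + y * b ^ n) mod b^n" using h(1) by simp
      moreover have "r' = (r' + y' * b ^ n) mod b^n" using h(2) by simp
      ultimately have "r = r'" using h(3) by metis
      moreover have "y = (r + y * b ^ n) div b^n" using h(1) Suc.prems by simp
      moreover have "y' = (r' + y' * b ^ n) div b^n" using h(2) Suc.prems by simp
      ultimately have "y = y'" using h(3) by metis
      show "y = y' \<and> r = r'" using \<open>r = r'\<close> \<open>y = y'\<close> by simp
    qed
  qed (use Suc in auto)
  finally show ?case by (simp only: img)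
qed


lemma phi_shift_nat:
  assumes per: "\<And>x. \<phi> (x + 1) = \<phi> x"
  shows "\<phi> (x + real N) = \<phi> x"
proof (induction N)
  case (Suc N)
  have "\<phi> (x + real (Suc N)) = \<phi> ((x + real N) + 1)" by (simp add: algebra_simps)
  then show ?case using per Suc by simp
qed simp

lemma phi_diff_lam:
  assumes per: "\<And>x. \<phi> (x + 1) = \<phi> x" and b: "b > 0"
  shows "\<phi> ((real k + 1) / real b ^ j) - \<phi> (real k / real b ^ j) = lam b \<phi> j (k mod b ^ j) / real b ^ j"
proof -
  let ?q = "k div b ^ j" and ?r = "k mod b ^ j"
  have bj: "real b ^ j > 0" using b by simp
  have k: "real k = real ?q * real b ^ j + real ?r"
    by (metis of_nat_add of_nat_mult of_nat_power div_mult_mod_eq)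
  have 1: "real k / real b ^ j = real ?r / real b ^ j + real ?q"
    using bj by (simp add: k field_simps)
  have 2: "(real k + 1) / real b ^ j = (real ?r + 1) / real b ^ j + real ?q"
    using bj by (simp add: k field_simps)
  show ?thesis
    unfolding 1 2 phi_shift_nat[of \<phi>, OF per] lam_def using bj by simp
qed

lemma fser_grid:
  assumes vanish: "\<And>k::int. \<phi> (of_int k) = 0" and b: "b > 0"
  shows "fser b \<xi> \<psi> \<phi> (real j / real b ^ n) =
         (\<Sum>m<n. \<xi> m * \<psi> (1 / real b ^ m) * \<phi> (real b ^ m * (real j / real b ^ n)))"
  unfolding fser_def
proof (rule suminf_finite)
  fix m assume "m \<notin> {..<n}"
  then have mn: "n \<le> m" by simp
  have "real b ^ m * (real j / real b ^ n) = real b ^ (m - n) * real j"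
    using b mn by (simp add: power_diff)
  also have "\<dots> = of_int (int (b ^ (m - n) * j))" by simp
  finally have "\<phi> (real b ^ m * (real j / real b ^ n)) = 0"
    using vanish by metis
  then show "\<xi> m * \<psi> (1 / real b ^ m) * \<phi> (real b ^ m * (real j / real b ^ n)) = 0"
    by simp
qed simp

lemma fser_diff:
  assumes per: "\<And>x. \<phi> (x + 1) = \<phi> x" and vanish: "\<And>k::int. \<phi> (of_int k) = 0" and b: "b > 0"
  shows "fser b \<xi> \<psi> \<phi> ((real k + 1) / real b ^ n) - fser b \<xi> \<psi> \<phi> (real k / real b ^ n) =
    (\<Sum>m=1..n. \<xi> (n - m) * \<psi> (1 / real b ^ (n - m)) / real b ^ m * lam b \<phi> m (k mod b ^ m))"
proof -
  have e: "(real k + 1) = real (Suc k)" by simp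
  have "fser b \<xi> \<psi> \<phi> ((real k + 1) / real b ^ n) - fser b \<xi> \<psi> \<phi> (real k / real b ^ n) =
     (\<Sum>m<n. \<xi> m * \<psi> (1 / real b ^ m) * (\<phi> (real b ^ m * ((real k + 1) / real b ^ n)) - \<phi> (real b ^ m * (real k / real b ^ n))))"
    unfolding e fser_grid[of \<phi>, OF vanish b] by (simp add: sum_subtractf algebra_simps)
  also have "\<dots> = (\<Sum>i<n. (\<lambda>m. \<xi> m * \<psi> (1 / real b ^ m) * (\<phi> (real b ^ m * ((real k + 1) / real b ^ n)) - \<phi> (real b ^ m * (real k / real b ^ n)))) (n - Suc i))"
    by (rule sum.nat_diff_reindex[symmetric])
  also have "\<dots> = (\<Sum>i<n. \<xi> (n - Suc i) * \<psi> (1 / real b ^ (n - Suc i)) / real b ^ Suc i * lam b \<phi> (Suc i) (k mod b ^ Suc i))"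
  proof (rule sum.cong[OF refl])
    fix i assume "i \<in> {..<n}"
    then have i: "Suc i \<le> n" by simp
    have bp: "real b ^ (n - Suc i) / real b ^ n = 1 / real b ^ Suc i"
      using b i by (simp add: power_diff field_simps)
    have x1: "real b ^ (n - Suc i) * ((real k + 1) / real b ^ n) = (real k + 1) / real b ^ Suc i"
      using bp by (metis times_divide_eq_right times_divide_eq_left mult.commute divide_divide_eq_left mult_1 times_divide_eq_right)
    have x2: "real b ^ (n - Suc i) * (real k / real b ^ n) = real k / real b ^ Suc i"
      using bp by (metis times_divide_eq_right times_divide_eq_left mult.commute divide_divide_eq_left mult_1 times_divide_eq_right)
    show "\<xi> (n - Suc i) * \<psi> (1 / real b ^ (n - Suc i)) * (\<phi> (real b ^ (n - Suc i) * ((real k + 1) / real b ^ n)) - \<phi> (real b ^ (n - Suc i) * (real k / real b ^ n))) =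
          \<xi> (n - Suc i) * \<psi> (1 / real b ^ (n - Suc i)) / real b ^ Suc i * lam b \<phi> (Suc i) (k mod b ^ Suc i)"
      unfolding x1 x2 phi_diff_lam[of \<phi>, OF per b] by simp
  qed
  also have "\<dots> = (\<Sum>m=1..n. \<xi> (n - m) * \<psi> (1 / real b ^ (n - m)) / real b ^ m * lam b \<phi> m (k mod b ^ m))"
    unfolding One_nat_def sum.atLeast1_atMost_eq by (rule refl)
  finally show ?thesis .
qed




lemma Ulaw_support: "U \<in> set_pmf (Ulaw b n) \<Longrightarrow> b > 0 \<Longrightarrow> i \<in> {1..n} \<Longrightarrow> U i < b"
  unfolding Ulaw_def by (subst (asm) set_Pi_pmf) (auto simp: PiE_dflt_def)

lemma Rnd_mod_supp: "U \<in> set_pmf (Ulaw b n) \<Longrightarrow> b > 0 \<Longrightarrow> m \<le> n \<Longrightarrow> Rnd b m U = Rnd b n U mod b^m"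
proof -
  assume U: "U \<in> set_pmf (Ulaw b n)" and b: "b > 0" and mn: "m \<le> n"
  have sup: "\<And>i. i \<in> {1..n} \<Longrightarrow> U i < b" using Ulaw_support[OF U b] by blast
  show ?thesis using Rnd_mod[OF b sup mn] .
qed

lemma part1:
  assumes per: "\<And>x. \<phi> (x + 1) = \<phi> x" and vanish: "\<And>k::int. \<phi> (of_int k) = 0" and b: "b > 0"
  shows "pvar b p 1 n (fser b \<xi> \<psi> \<phi>) =
      real b ^ n * measure_pmf.expectation (Ulaw b n)
        (\<lambda>U. \<bar>\<Sum>m=1..n. \<xi> (n - m) * \<psi> (1 / real b ^ (n - m)) / real b ^ m * Yrv b \<phi> m U\<bar> powr p)"
proof -
  define c where "c m = \<xi> (n - m) * \<psi> (1 / real b ^ (n - m)) / real b ^ m" for m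
  define G where "G k = \<bar>\<Sum>m=1..n. c m * lam b \<phi> m (k mod b ^ m)\<bar> powr p" for k
  have bn: "real b ^ n > 0" using b by simp
  have "measure_pmf.expectation (Ulaw b n) (\<lambda>U. \<bar>\<Sum>m=1..n. c m * Yrv b \<phi> m U\<bar> powr p)
      = measure_pmf.expectation (Ulaw b n) (\<lambda>U. G (Rnd b n U))"
  proof (rule integral_cong_AE)
    show "AE U in measure_pmf (Ulaw b n). \<bar>\<Sum>m=1..n. c m * Yrv b \<phi> m U\<bar> powr p = G (Rnd b n U)"
    proof (rule AE_pmfI)
      fix U assume U: "U \<in> set_pmf (Ulaw b n)"
      have "Yrv b \<phi> m U = lam b \<phi> m (Rnd b n U mod b ^ m)" if "m \<in> {1..n}" for m
      proof -
        have "m \<le> n" using that by simp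
        then have "Rnd b m U = Rnd b n U mod b^m" by (rule Rnd_mod_supp[OF U b])
        then show ?thesis unfolding Yrv_def by simp
      qed
      then have "(\<Sum>m=1..n. c m * Yrv b \<phi> m U) = (\<Sum>m=1..n. c m * lam b \<phi> m (Rnd b n U mod b ^ m))"
        by (intro sum.cong) auto
      then show "\<bar>\<Sum>m=1..n. c m * Yrv b \<phi> m U\<bar> powr p = G (Rnd b n U)"
        unfolding G_def by simp
    qed
  qed auto
  also have "\<dots> = measure_pmf.expectation (map_pmf (Rnd b n) (Ulaw b n)) G" by simp
  also have "\<dots> = sum G {0..<b^n} / real b ^ n"
    unfolding Rnd_law[OF b] using b by (subst integral_pmf_of_set) auto
  finally have E: "real b ^ n * measure_pmf.expectation (Ulaw b n) (\<lambda>U. \<bar>\<Sum>m=1..n. c m * Yrv b \<phi> m U\<bar> powr p)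
     = sum G {0..<b^n}" using bn by simp
  have fl: "nat \<lfloor>1 * real b ^ n\<rfloor> = b ^ n"
  proof -
    have "1 * real b ^ n = real (b ^ n)" by simp
    then show ?thesis by (simp only: floor_of_nat nat_int)
  qed
  have ins: "{0..b^n} = insert (b^n) {0..<b^n}" by auto
  have last: "\<bar>fser b \<xi> \<psi> \<phi> (min 1 ((real (b^n) + 1) / real b ^ n)) - fser b \<xi> \<psi> \<phi> (min 1 (real (b^n) / real b ^ n))\<bar> powr p = 0"
  proof -
    have "min 1 ((real (b^n) + 1) / real b ^ n) = 1" "min 1 (real (b^n) / real b ^ n) = 1"
      using bn by (auto simp: min_def field_simps)
    then show ?thesis by simp
  qed
  have mid: "\<bar>fser b \<xi> \<psi> \<phi> (min 1 ((real k + 1) / real b ^ n)) - fser b \<xi> \<psi> \<phi> (min 1 (real k / real b ^ n))\<bar> powr p = G k"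
    if "k \<in> {0..<b^n}" for k
  proof -
    have "k + 1 \<le> b ^ n" using that by simp
    then have "real (k + 1) \<le> real (b ^ n)" by (simp only: of_nat_le_iff)
    then have "real k + 1 \<le> real b ^ n" by simp
    then have l1: "(real k + 1) / real b ^ n \<le> 1" "real k / real b ^ n \<le> 1"
      using bn \<open>k + 1 \<le> b ^ n\<close> by (simp_all add: divide_le_eq_1)
    then have mm: "min 1 ((real k + 1) / real b ^ n) = (real k + 1) / real b ^ n"
      "min 1 (real k / real b ^ n) = real k / real b ^ n" by (simp_all add: min_absorb2)
    show ?thesis unfolding mm G_def c_def fser_diff[of \<phi>, OF per vanish b] by simp
  qed
  have "pvar b p 1 n (fser b \<xi> \<psi> \<phi>) = sum G {0..<b^n}"
    unfolding pvar_def fl ins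
    apply (subst sum.insert)
      apply simp
     apply simp
    apply (simp only: last add_0_left)
    apply (rule sum.cong[OF refl mid])
    apply assumption
    done
  then show ?thesis using E unfolding c_def by simp
qed


lemma power_powr_real: "((x::real) ^ n) powr p = (x powr p) ^ n"
  by (induction n) (simp_all add: powr_mult)

lemma t1: fixes q B x y :: real assumes "q > 0" "B > 0" "m \<le> n"
  shows "x * q ^ (n - m) / B ^ m * y = q ^ n * (x / (q * B) ^ m * y)"
proof -
  have "q ^ n = q ^ (n - m) * q ^ m" using assms(3) by (simp flip: power_add)
  then show ?thesis using assms by (simp add: power_mult_distrib)
qed

lemma t2: fixes q S :: real assumes "q > 0" shows "\<bar>q ^ n * S\<bar> powr p = (q powr p) ^ n * \<bar>S\<bar> powr p"
  using assms by (simp add: abs_mult powr_mult power_powr_real)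

lemma psi_pow:
  fixes \<psi> :: "real \<Rightarrow> real"
  assumes mult: "\<forall>x y. x > 0 \<longrightarrow> y > 0 \<longrightarrow> \<psi> (x * y) = \<psi> x * \<psi> y"
    and pos: "\<And>x. x > 0 \<Longrightarrow> \<psi> x > 0" and b: "b > 0"
  shows "\<psi> (1 / real b ^ k) = \<psi> (1 / real b) ^ k"
proof (induction k)
  case 0
  have h: "\<psi> 1 = \<psi> 1 * \<psi> 1" using mult[rule_format, of 1 1] by simp
  have p1: "\<psi> 1 > 0" using pos by simp
  have "\<psi> 1 * (\<psi> 1 - 1) = 0" using h by (simp add: right_diff_distrib)
  then show ?case using p1 by simp
next
  case (Suc k)
  have e: "1 / real b ^ Suc k = (1 / real b) * (1 / real b ^ k)" by simp
  have "\<psi> ((1 / real b) * (1 / real b ^ k)) = \<psi> (1 / real b) * \<psi> (1 / real b ^ k)"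
    by (rule mult[rule_format]) (use b in simp_all)
  then show ?case unfolding e Suc by simp
qed

theorem lemma2p4:
  fixes b :: nat and \<xi> :: "nat \<Rightarrow> real" and \<phi> \<psi> :: "real \<Rightarrow> real" and \<gamma> :: real
  assumes b: "b \<ge> 2"
    and xi: "\<And>m. \<xi> m \<in> {-1, 1}"
    and per: "\<And>x. \<phi> (x + 1) = \<phi> x"
    and vanish: "\<And>k::int. \<phi> (of_int k) = 0"
    and gam: "0 < \<gamma>" "\<gamma> \<le> 1"
    and hoelder: "\<exists>C. \<forall>x y. \<bar>\<phi> x - \<phi> y\<bar> \<le> C * \<bar>x - y\<bar> powr \<gamma>"
    and psi_pos: "\<And>x. x > 0 \<Longrightarrow> \<psi> x > 0"
    and psi_sub: "\<And>x y. x > 0 \<Longrightarrow> y > 0 \<Longrightarrow> \<psi> (x * y) \<le> \<psi> x * \<psi> y"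
    and psi_b: "0 < \<psi> (1 / real b)" "\<psi> (1 / real b) < 1"
  shows "(\<forall>n::nat. \<forall>p::real. n \<ge> 1 \<longrightarrow> p \<ge> 1 \<longrightarrow>
            pvar b p 1 n (fser b \<xi> \<psi> \<phi>) =
              real b ^ n * measure_pmf.expectation (Ulaw b n)
                (\<lambda>U. \<bar>\<Sum>m=1..n. \<xi> (n - m) * \<psi> (1 / real b ^ (n - m)) / real b ^ m * Yrv b \<phi> m U\<bar> powr p))
       \<and> ((\<forall>x y. x > 0 \<longrightarrow> y > 0 \<longrightarrow> \<psi> (x * y) = \<psi> x * \<psi> y) \<longrightarrow>
          (\<forall>n::nat. \<forall>p::real. n \<ge> 1 \<longrightarrow> p \<ge> 1 \<longrightarrow>
            pvar b p 1 n (fser b \<xi> \<psi> \<phi>) =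
              (\<psi> (1 / real b) powr p * real b) ^ n * measure_pmf.expectation (Ulaw b n)
                (\<lambda>U. \<bar>\<Sum>m=1..n. \<xi> (n - m) / (\<psi> (1 / real b) * real b) ^ m * Yrv b \<phi> m U\<bar> powr p)))"
proof
  have b0: "b > 0" using b by simp
  show "\<forall>n::nat. \<forall>p::real. n \<ge> 1 \<longrightarrow> p \<ge> 1 \<longrightarrow>
            pvar b p 1 n (fser b \<xi> \<psi> \<phi>) =
              real b ^ n * measure_pmf.expectation (Ulaw b n)
                (\<lambda>U. \<bar>\<Sum>m=1..n. \<xi> (n - m) * \<psi> (1 / real b ^ (n - m)) / real b ^ m * Yrv b \<phi> m U\<bar> powr p)"
    by (intro allI impI) (rule part1[of \<phi>, OF per vanish b0])
  show "(\<forall>x y. x > 0 \<longrightarrow> y > 0 \<longrightarrow> \<psi> (x * y) = \<psi> x * \<psi> y) \<longrightarrow>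
          (\<forall>n::nat. \<forall>p::real. n \<ge> 1 \<longrightarrow> p \<ge> 1 \<longrightarrow>
            pvar b p 1 n (fser b \<xi> \<psi> \<phi>) =
              (\<psi> (1 / real b) powr p * real b) ^ n * measure_pmf.expectation (Ulaw b n)
                (\<lambda>U. \<bar>\<Sum>m=1..n. \<xi> (n - m) / (\<psi> (1 / real b) * real b) ^ m * Yrv b \<phi> m U\<bar> powr p))"
  proof (intro impI allI)
    fix n :: nat and p :: real
    assume mult: "\<forall>x y. x > 0 \<longrightarrow> y > 0 \<longrightarrow> \<psi> (x * y) = \<psi> x * \<psi> y"
      and "n \<ge> 1" "p \<ge> 1"
    define q where "q = \<psi> (1 / real b)"
    have q0: "q > 0" using psi_b q_def by simp
    have bq: "real b > 0" using b0 by simp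
    have trm: "\<xi> (n - m) * \<psi> (1 / real b ^ (n - m)) / real b ^ m * y
        = q ^ n * (\<xi> (n - m) / (q * real b) ^ m * y)" if "m \<in> {1..n}" for m y
    proof -
      have mn: "m \<le> n" using that by simp
      have "\<psi> (1 / real b ^ (n - m)) = q ^ (n - m)" unfolding q_def by (rule psi_pow[OF mult psi_pos b0])
      then show ?thesis using t1[OF q0 bq mn] by simp
    qed
    have "measure_pmf.expectation (Ulaw b n)
        (\<lambda>U. \<bar>\<Sum>m=1..n. \<xi> (n - m) * \<psi> (1 / real b ^ (n - m)) / real b ^ m * Yrv b \<phi> m U\<bar> powr p)
      = measure_pmf.expectation (Ulaw b n)
        (\<lambda>U. (q powr p) ^ n * \<bar>\<Sum>m=1..n. \<xi> (n - m) / (q * real b) ^ m * Yrv b \<phi> m U\<bar> powr p)"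
    proof (rule arg_cong[where f="measure_pmf.expectation (Ulaw b n)"], rule ext)
      fix U
      have "(\<Sum>m=1..n. \<xi> (n - m) * \<psi> (1 / real b ^ (n - m)) / real b ^ m * Yrv b \<phi> m U)
          = q ^ n * (\<Sum>m=1..n. \<xi> (n - m) / (q * real b) ^ m * Yrv b \<phi> m U)"
        unfolding sum_distrib_left by (rule sum.cong[OF refl trm])
      then show "\<bar>\<Sum>m=1..n. \<xi> (n - m) * \<psi> (1 / real b ^ (n - m)) / real b ^ m * Yrv b \<phi> m U\<bar> powr p
          = (q powr p) ^ n * \<bar>\<Sum>m=1..n. \<xi> (n - m) / (q * real b) ^ m * Yrv b \<phi> m U\<bar> powr p"
        by (simp only: t2[OF q0])
    qed
    also have "\<dots> = (q powr p) ^ n * measure_pmf.expectation (Ulaw b n)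
        (\<lambda>U. \<bar>\<Sum>m=1..n. \<xi> (n - m) / (q * real b) ^ m * Yrv b \<phi> m U\<bar> powr p)"
      by (rule integral_mult_right_zero)
    finally have E: "measure_pmf.expectation (Ulaw b n)
        (\<lambda>U. \<bar>\<Sum>m=1..n. \<xi> (n - m) * \<psi> (1 / real b ^ (n - m)) / real b ^ m * Yrv b \<phi> m U\<bar> powr p)
       = (q powr p) ^ n * measure_pmf.expectation (Ulaw b n)
        (\<lambda>U. \<bar>\<Sum>m=1..n. \<xi> (n - m) / (q * real b) ^ m * Yrv b \<phi> m U\<bar> powr p)" .
    show "pvar b p 1 n (fser b \<xi> \<psi> \<phi>) =
              (\<psi> (1 / real b) powr p * real b) ^ n * measure_pmf.expectation (Ulaw b n)
                (\<lambda>U. \<bar>\<Sum>m=1..n. \<xi> (n - m) / (\<psi> (1 / real b) * real b) ^ m * Yrv b \<phi> m U\<bar> powr p)"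
      unfolding part1[of \<phi>, OF per vanish b0] q_def[symmetric] E
      by (simp only: power_mult_distrib mult_ac)
  qed
qed

end
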